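(* Let $\Delta\ge3$. Given a proper $\Delta$-edge coloring with colors $1,\dots,\Delta$ and a solution of $\Pi^{\Delta}$ on a $\Delta$-regular graph, a solution of $\Pi^{\mathsf{orcx}}$ can be computed in $0$ rounds. Equivalently, $\Pi^{\Delta}\times\mathrm{EC}_\Delta\xrightarrow{0}\Pi^{\mathsf{orcx}}$, where $\mathrm{EC}_\Delta$ is the $\Delta$-edge coloring problem.
   Context: Node-edge-checkable problems $(\Sigma,\mathcal{N},\mathcal{E})$ label half-edges of a $\Delta$-regular graph. $\mathcal{N}$ lists the allowed multisets of the $\Delta$ labels around a node and $\mathcal{E}$ the allowed multisets of the $2$ labels on an edge. Relaxation. $\Pi\xrightarrow{0}\Pi'$ means there is a map $f$ with the following properties. For every $C\in\mathcal{N}_\Pi$ and position $j$, $f$ assigns a label $f(C,j)\in\Sigma_{\Pi'}$. The map must satisfy: - it maps node configurations to node configurations of $\Pi'$; - whenever the $j$-th entry of $C$ and the $j'$-th entry of $C'$ form an element of $\mathcal{E}_\Pi$, then $f(C,j)f(C',j')\in\mathcal{E}_{\Pi'}$. Product. $\Pi\times\Pi'$ has paired labels; node (resp. edge) configurations are those whose first and second coordinates form node (resp. edge) configurations of $\Pi$ and $\Pi'$, respectively. $\mathrm{EC}_\Delta$ has labels $\{1,\dots,\Delta\}$, node configuration $1\,2\cdots\Delta$, and edge configurations $i\,i$. $\Pi^{\Delta}$ has labels $(y,z)\in\{1,\dots,\Delta\}^2$ and node configurations $c\cdots c$ for each label $c$. Its edge configurations are the $(y,z)(y',z')$ such that at least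 one of the following holds: - (1) $y\ne1\ne z$, $y\ne y'$ and $z\ne z'$ (or symmetrically $y'\ne1\ne z'$, $y\ne y'$ and $z\ne z'$); - (2) $y=y'=1$, $z\ne1\ne z'$ and $z\ne z'$; - (3) $z=z'=1$, $y\ne1\ne y'$ and $y\ne y'$. $\Pi^{\mathsf{orcx}}$ has labels $\Sigma_1\cup\Sigma_2$ with $\Sigma_1=\{\mathsf O,\mathsf R,\mathsf C,\mathsf X\}$ and $\Sigma_2=\{\mathsf o,\mathsf r,\mathsf c,\mathsf x\}$. Its node configurations are the $L_1\dots L_\Delta$ such that: - exactly one $L_k$ lies in $\Sigma_1$; and - there are distinct $k,k'$ such that all other $L_{k''}\in\{\mathsf O,\mathsf o\}$, and either ($L_k\in\{\mathsf X,\mathsf x\}$ and $L_{k'}\in\{\mathsf O,\mathsf o\}$) or ($L_k\in\{\mathsf R,\mathsf r\}$ and $L_{k'}\in\{\mathsf C,\mathsf c\}$). Its edge configurations are all configurations in $[\mathsf O]\,[\mathsf O\mathsf R\mathsf C\mathsf X]$, $[\mathsf O\mathsf R]\,[\mathsf O\mathsf R]$, $[\mathsf O\mathsf C]\,[\mathsf O\mathsf C]$, $[\mathsf o]\,[\mathsf o\mathsf r\mathsf c\mathsf x]$ and $[\mathsf o\mathsf r]\,[\mathsf o\mathsf c]$, where $[XY]\,[ZW]$ means one entry is from the first set and the other from the second. *)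

theory Defs
  imports Main "HOL-Library.Multiset"
begin

text \<open>Node-edge-checkable problems: a label set, node configurations (multisets of
  labels, of size Delta) and edge configurations (multisets of size 2).\<close>
record 'a ne_problem =
  labels :: "'a set"
  nodes  :: "'a multiset set"
  edges  :: "'a multiset set"

text \<open>A node configuration C is given with positions,
  i.e. as a list L of length Delta with mset L in the node constraint; f assigns to
  every such L and position j < Delta an output label.\<close>
definition relax0 :: "nat \<Rightarrow> 'a ne_problem \<Rightarrow> 'b ne_problem \<Rightarrow> bool" where
  "relax0 \<Delta> P Q \<longleftrightarrow> (\<exists>f :: 'a list \<Rightarrow> nat \<Rightarrow> 'b.
     (\<forall>L j. length L = \<Delta> \<and> mset L \<in> nodes P \<and> j < \<Delta> \<longrightarrow> f L j \<in> labels Q) \<and>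
     (\<forall>L. length L = \<Delta> \<and> mset L \<in> nodes P \<longrightarrow> mset (map (f L) [0..<\<Delta>]) \<in> nodes Q) \<and>
     (\<forall>L L' j j'. length L = \<Delta> \<and> mset L \<in> nodes P \<and> j < \<Delta> \<and>
                  length L' = \<Delta> \<and> mset L' \<in> nodes P \<and> j' < \<Delta> \<and>
                  {#L ! j, L' ! j'#} \<in> edges P \<longrightarrow> {#f L j, f L' j'#} \<in> edges Q))"

definition prod_problem :: "'a ne_problem \<Rightarrow> 'b ne_problem \<Rightarrow> ('a \<times> 'b) ne_problem" where
  "prod_problem P Q = \<lparr> labels = labels P \<times> labels Q,
     nodes = {M. set_mset M \<subseteq> labels P \<times> labels Q \<and>
                 image_mset fst M \<in> nodes P \<and> image_mset snd M \<in> nodes Q},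
     edges = {M. set_mset M \<subseteq> labels P \<times> labels Q \<and>
                 image_mset fst M \<in> edges P \<and> image_mset snd M \<in> edges Q} \<rparr>"

definition EC :: "nat \<Rightarrow> nat ne_problem" where
  "EC \<Delta> = \<lparr> labels = {1..\<Delta>},
     nodes = {mset [1..<\<Delta>+1]},
     edges = {{#i, i#} | i. i \<in> {1..\<Delta>}} \<rparr>"

definition PiD_edge :: "nat \<times> nat \<Rightarrow> nat \<times> nat \<Rightarrow> bool" where
  "PiD_edge a b \<longleftrightarrow> (case a of (y, z) \<Rightarrow> case b of (y', z') \<Rightarrow>
      (y \<noteq> 1 \<and> z \<noteq> 1 \<and> y \<noteq> y' \<and> z \<noteq> z') \<or>
      (y' \<noteq> 1 \<and> z' \<noteq> 1 \<and> y \<noteq> y' \<and> z \<noteq> z') \<or>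
      (y = 1 \<and> y' = 1 \<and> z \<noteq> 1 \<and> z' \<noteq> 1 \<and> z \<noteq> z') \<or>
      (z = 1 \<and> z' = 1 \<and> y \<noteq> 1 \<and> y' \<noteq> 1 \<and> y \<noteq> y'))"

definition PiD :: "nat \<Rightarrow> (nat \<times> nat) ne_problem" where
  "PiD \<Delta> = \<lparr> labels = {1..\<Delta>} \<times> {1..\<Delta>},
     nodes = {replicate_mset \<Delta> c | c. c \<in> {1..\<Delta>} \<times> {1..\<Delta>}},
     edges = {{#a, b#} | a b. a \<in> {1..\<Delta>} \<times> {1..\<Delta>} \<and> b \<in> {1..\<Delta>} \<times> {1..\<Delta>} \<and> PiD_edge a b} \<rparr>"

datatype orcx = O_up | R_up | C_up | X_up | o_lo | r_lo | c_lo | x_lo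

definition sigma1 :: "orcx set" where "sigma1 = {O_up, R_up, C_up, X_up}"
definition sigma2 :: "orcx set" where "sigma2 = {o_lo, r_lo, c_lo, x_lo}"

definition orcx_node_list :: "nat \<Rightarrow> orcx list \<Rightarrow> bool" where
  "orcx_node_list \<Delta> L \<longleftrightarrow> length L = \<Delta> \<and>
     card {k. k < \<Delta> \<and> L ! k \<in> sigma1} = 1 \<and>
     (\<exists>k k'. k < \<Delta> \<and> k' < \<Delta> \<and> k \<noteq> k' \<and>
        (\<forall>k''. k'' < \<Delta> \<and> k'' \<noteq> k \<and> k'' \<noteq> k' \<longrightarrow> L ! k'' \<in> {O_up, o_lo}) \<and>
        ((L ! k \<in> {X_up, x_lo} \<and> L ! k' \<in> {O_up, o_lo}) \<or>
         (L ! k \<in> {R_up, r_lo} \<and> L ! k' \<in> {C_up, c_lo})))"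

definition orcx_edge :: "orcx \<Rightarrow> orcx \<Rightarrow> bool" where
  "orcx_edge a b \<longleftrightarrow>
     (a \<in> {O_up} \<and> b \<in> {O_up, R_up, C_up, X_up}) \<or>
     (a \<in> {O_up, R_up} \<and> b \<in> {O_up, R_up}) \<or>
     (a \<in> {O_up, C_up} \<and> b \<in> {O_up, C_up}) \<or>
     (a \<in> {o_lo} \<and> b \<in> {o_lo, r_lo, c_lo, x_lo}) \<or>
     (a \<in> {o_lo, r_lo} \<and> b \<in> {o_lo, c_lo})"

definition PiORCX :: "nat \<Rightarrow> orcx ne_problem" where
  "PiORCX \<Delta> = \<lparr> labels = sigma1 \<union> sigma2,
     nodes = {mset L | L. orcx_node_list \<Delta> L},
     edges = {{#a, b#} | a b. orcx_edge a b \<or> orcx_edge b a} \<rparr>"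

end

theory Submission
  imports Defs
begin

definition g :: "nat \<Rightarrow> nat \<Rightarrow> nat \<Rightarrow> orcx" where
"g y z col = (if col = 1 then (if y\<noteq>1 \<and> z\<noteq>1 then O_up else if y=1 \<and> z\<noteq>1 then R_up else if y\<noteq>1 \<and> z=1 then C_up else X_up)
 else if y\<noteq>1 \<and> z\<noteq>1 then (if y=z then (if col=y then x_lo else o_lo) else if col=y then r_lo else if col=z then c_lo else o_lo)
 else if y=1 \<and> z\<noteq>1 then (if col=z then c_lo else o_lo)
 else if y\<noteq>1 \<and> z = 1 then (if col = y then r_lo else o_lo) else o_lo)"

lemma edge_ok: "PiD_edge (y,z) (y',z') \<Longrightarrow> orcx_edge (g y z col) (g y' z' col) \<or> orcx_edge (g y' z' col) (g y z col)"
  unfolding PiD_edge_def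
  apply (cases "y=1"; cases "z=1"; cases "y'=1"; cases "z'=1"; cases "col=1")
  apply (simp_all add: g_def orcx_edge_def)
  done

lemma mset2: "{#a,b#} = {#c,d#} \<longleftrightarrow> (a=c\<and>b=d) \<or> (a=d\<and>b=c)"
  by (auto simp: add_eq_conv_diff)

lemma g_labels: "g y z col \<in> sigma1 \<union> sigma2"
  by (simp add: g_def sigma1_def sigma2_def)

lemma g_sigma1: "g y z col \<in> sigma1 \<longleftrightarrow> col = 1"
  by (simp add: g_def sigma1_def)

lemma node_facts:
  assumes "length L = \<Delta>" "mset L \<in> nodes (prod_problem (PiD \<Delta>) (EC \<Delta>))"
  shows "\<exists>y z. y \<in> {1..\<Delta>} \<and> z \<in> {1..\<Delta>} \<and> (\<forall>j<\<Delta>. fst (L!j) = (y,z)) \<and>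
          distinct (map snd L) \<and> set (map snd L) = {1..\<Delta>}"
proof -
  from assms(2) obtain c where c: "c \<in> {1..\<Delta>} \<times> {1..\<Delta>}" "image_mset fst (mset L) = replicate_mset \<Delta> c"
    and s: "image_mset snd (mset L) = mset [1..<\<Delta>+1]"
    by (auto simp: prod_problem_def PiD_def EC_def)
  have "mset (map fst L) = mset (replicate \<Delta> c)" using c(2) by simp
  then have "set (map fst L) = set (replicate \<Delta> c)" by (rule mset_eq_setD)
  then have fc: "\<forall>j<\<Delta>. fst (L!j) = c" using assms(1) by auto
  have ms: "mset (map snd L) = mset [1..<\<Delta>+1]" using s by simp
  have "distinct (map snd L)" using mset_eq_imp_distinct_iff[OF ms] by simp
  moreover have "set (map snd L) = {1..\<Delta>}" using mset_eq_setD[OF ms] by auto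
  ultimately show ?thesis using c(1) fc by (cases c) auto
qed

lemma node_ok:
  assumes "\<Delta> \<ge> 3" "length P = \<Delta>" "distinct P" "set P = {1..\<Delta>}" "y \<in> {1..\<Delta>}" "z \<in> {1..\<Delta>}"
  shows "orcx_node_list \<Delta> (map (\<lambda>i. g y z (P!i)) [0..<\<Delta>])"
proof -
  have ex: "\<exists>i<\<Delta>. P!i = v" if "v \<in> {1..\<Delta>}" for v
    using that assms(2,4) by (metis in_set_conv_nth)
  obtain i1 where i1: "i1 < \<Delta>" "P!i1 = 1" using ex[of 1] assms(1) by auto
  obtain i2 where i2: "i2 < \<Delta>" "P!i2 = 2" using ex[of 2] assms(1) by auto
  obtain iy where iy: "iy < \<Delta>" "P!iy = y" using ex assms(5) by blast
  obtain iz where iz: "iz < \<Delta>" "P!iz = z" using ex assms(6) by blast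
  have inj: "P!a = P!b \<longleftrightarrow> a = b" if "a < \<Delta>" "b < \<Delta>" for a b
    using nth_eq_iff_index_eq[OF assms(3)] that assms(2) by auto
  have n1: "P!k \<noteq> 1" if "k < \<Delta>" "k \<noteq> i1" for k using inj[OF that(1) i1(1)] i1 that by auto
  have ny: "P!k \<noteq> y" if "k < \<Delta>" "k \<noteq> iy" for k using inj[OF that(1) iy(1)] iy that by auto
  have nz: "P!k \<noteq> z" if "k < \<Delta>" "k \<noteq> iz" for k using inj[OF that(1) iz(1)] iz that by auto
  have "{k. k < \<Delta> \<and> map (\<lambda>i. g y z (P!i)) [0..<\<Delta>] ! k \<in> sigma1} = {i1}"
    using i1 inj by (auto simp: g_sigma1) (metis i1(2))
  then have card: "card {k. k < \<Delta> \<and> map (\<lambda>i. g y z (P!i)) [0..<\<Delta>] ! k \<in> sigma1} = 1" by simp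
  have "\<exists>k k'. k < \<Delta> \<and> k' < \<Delta> \<and> k \<noteq> k' \<and>
        (\<forall>k''. k'' < \<Delta> \<and> k'' \<noteq> k \<and> k'' \<noteq> k' \<longrightarrow> g y z (P!k'') \<in> {O_up, o_lo}) \<and>
        ((g y z (P!k) \<in> {X_up, x_lo} \<and> g y z (P!k') \<in> {O_up, o_lo}) \<or>
         (g y z (P!k) \<in> {R_up, r_lo} \<and> g y z (P!k') \<in> {C_up, c_lo}))"
  proof (cases "y = 1")
    case y1: True
    show ?thesis
    proof (cases "z = 1")
      case True
      have "i1 \<noteq> i2" using i1 i2 by auto
      then show ?thesis using True y1 i1 i2 n1
        by (intro exI[of _ i1] exI[of _ i2]) (auto simp: g_def)
    next
      case False
      then show ?thesis using y1 i1 iz n1 nz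
        by (intro exI[of _ i1] exI[of _ iz]) (auto simp: g_def)
    qed
  next
    case yn: False
    show ?thesis
    proof (cases "z = 1")
      case True
      then show ?thesis using yn i1 iy n1 ny
        by (intro exI[of _ iy] exI[of _ i1]) (auto simp: g_def)
    next
      case zn: False
      show ?thesis
      proof (cases "y = z")
        case True
        then show ?thesis using yn zn i1 iy n1 ny
          by (intro exI[of _ iy] exI[of _ i1]) (auto simp: g_def)
      next
        case False
        then show ?thesis using yn zn iz iy n1 ny nz
          by (intro exI[of _ iy] exI[of _ iz]) (auto simp: g_def)
      qed
    qed
  qed
  then obtain k k' where kk: "k < \<Delta> \<and> k' < \<Delta> \<and> k \<noteq> k' \<and>
        (\<forall>k''. k'' < \<Delta> \<and> k'' \<noteq> k \<and> k'' \<noteq> k' \<longrightarrow> g y z (P!k'') \<in> {O_up, o_lo}) \<and>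
        ((g y z (P!k) \<in> {X_up, x_lo} \<and> g y z (P!k') \<in> {O_up, o_lo}) \<or>
         (g y z (P!k) \<in> {R_up, r_lo} \<and> g y z (P!k') \<in> {C_up, c_lo}))" by blast
  show ?thesis unfolding orcx_node_list_def
    apply (intro conjI)
      apply simp
     apply (rule card)
    apply (rule exI[of _ k], rule exI[of _ k'])
    using kk by simp
qed

theorem mainTheorem17:
  fixes \<Delta> :: nat
  assumes "\<Delta> \<ge> 3"
  shows "relax0 \<Delta> (prod_problem (PiD \<Delta>) (EC \<Delta>)) (PiORCX \<Delta>)"
proof -
  define f where "f L j = g (fst (fst (L!j))) (snd (fst (L!j))) (snd (L!j))" for L :: "((nat \<times> nat) \<times> nat) list" and j
  have A: "\<forall>L j. length L = \<Delta> \<and> mset L \<in> nodes (prod_problem (PiD \<Delta>) (EC \<Delta>)) \<and> j < \<Delta> \<longrightarrow> f L j \<in> labels (PiORCX \<Delta>)"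
    using g_labels by (simp add: f_def PiORCX_def)
  have B: "mset (map (f L) [0..<\<Delta>]) \<in> nodes (PiORCX \<Delta>)"
    if LL: "length L = \<Delta>" "mset L \<in> nodes (prod_problem (PiD \<Delta>) (EC \<Delta>))" for L
  proof -
    obtain y z where yz: "y \<in> {1..\<Delta>}" "z \<in> {1..\<Delta>}" "\<forall>j<\<Delta>. fst (L!j) = (y,z)"
      "distinct (map snd L)" "set (map snd L) = {1..\<Delta>}"
      using node_facts[OF LL] by blast
    have eq: "map (f L) [0..<\<Delta>] = map (\<lambda>i. g y z (map snd L ! i)) [0..<\<Delta>]"
      using yz(3) that(1) by (auto simp: f_def)
    have "orcx_node_list \<Delta> (map (f L) [0..<\<Delta>])"
      unfolding eq using node_ok[OF assms _ yz(4) yz(5) yz(1) yz(2)] that(1) by simp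
    then have "mset (map (f L) [0..<\<Delta>]) \<in> {mset L | L. orcx_node_list \<Delta> L}" by blast
    then show ?thesis by (simp only: PiORCX_def ne_problem.simps)
  qed
  have C: "{#f L j, f L' j'#} \<in> edges (PiORCX \<Delta>)"
    if "length L = \<Delta>" "mset L \<in> nodes (prod_problem (PiD \<Delta>) (EC \<Delta>))" "j < \<Delta>"
       "length L' = \<Delta>" "mset L' \<in> nodes (prod_problem (PiD \<Delta>) (EC \<Delta>))" "j' < \<Delta>"
       "{#L ! j, L' ! j'#} \<in> edges (prod_problem (PiD \<Delta>) (EC \<Delta>))" for L L' j j'
  proof -
    obtain y z col where a: "L!j = ((y,z),col)" by (metis prod.collapse)
    obtain y' z' col' where b: "L'!j' = ((y',z'),col')" by (metis prod.collapse)
    from that(7) a b have e1: "{#(y,z),(y',z')#} \<in> edges (PiD \<Delta>)" and e2: "{#col,col'#} \<in> edges (EC \<Delta>)"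
      by (auto simp: prod_problem_def)
    from e2 have cc: "col' = col" by (auto simp: EC_def mset2)
    from e1 have "PiD_edge (y,z) (y',z') \<or> PiD_edge (y',z') (y,z)"
      by (auto simp: PiD_def mset2)
    then have "orcx_edge (g y z col) (g y' z' col) \<or> orcx_edge (g y' z' col) (g y z col)"
      using edge_ok by blast
    then show ?thesis using a b cc by (auto simp: PiORCX_def f_def)
  qed
  show ?thesis unfolding relax0_def
    apply (rule exI[of _ f])
    using A B C by blast
qed

end
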